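(* Let $1\leq n\leq N$ and let $R_N$ be a rejective sampling design of size $n$ with canonical parameters $\mathbf{p}_N=(p_1,\ldots,p_N)\in(0,1)^N$, $\sum_{i=1}^Np_i=n$, and first-order inclusion probabilities $\pi_1,\ldots,\pi_N$. Let $d_N=\sum_{i=1}^Np_i(1-p_i)$ and suppose $d_N\geq1$. Then for all $i\in\{1,\ldots,N\}$, $$\left|\frac1{\pi_i}-\frac1{p_i}\right|\leq\frac{6}{d_N}\cdot\frac{1-\pi_i}{\pi_i}.$$
   Context: A rejective design of size $n$ on $\{1,\ldots,N\}$ with canonical parameters $\mathbf{p}_N$ (satisfying $\sum_ip_i=n$) is the distribution of a random subset $S$ with $\mathbb{P}(S=s)=C\prod_{i\in s}p_i\prod_{i\notin s}(1-p_i)$ if $\#s=n$ and $0$ otherwise, $C$ a normalizing constant; $\pi_i=\mathbb{P}(i\in S)$. *)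

theory Defs
  imports "HOL-Analysis.Analysis"
begin

definition rej_weight :: "nat \<Rightarrow> (nat \<Rightarrow> real) \<Rightarrow> nat set \<Rightarrow> real" where
  "rej_weight N p s = (\<Prod>i\<in>s. p i) * (\<Prod>i\<in>{1..N} - s. 1 - p i)"

definition rej_samples :: "nat \<Rightarrow> nat \<Rightarrow> nat set set" where
  "rej_samples N n = {s. s \<subseteq> {1..N} \<and> card s = n}"

definition rej_prob :: "nat \<Rightarrow> nat \<Rightarrow> (nat \<Rightarrow> real) \<Rightarrow> nat set \<Rightarrow> real" where
  "rej_prob N n p s =
     (if s \<in> rej_samples N n
      then rej_weight N p s / (\<Sum>t\<in>rej_samples N n. rej_weight N p t)
      else 0)"

definition rej_incl :: "nat \<Rightarrow> nat \<Rightarrow> (nat \<Rightarrow> real) \<Rightarrow> nat \<Rightarrow> real" where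
  "rej_incl N n p i = (\<Sum>s\<in>{s\<in>rej_samples N n. i \<in> s}. rej_prob N n p s)"

end

theory Submission
  imports Defs
begin


definition wt :: "(nat \<Rightarrow> real) \<Rightarrow> nat set \<Rightarrow> nat set \<Rightarrow> real" where
  "wt p U s = (\<Prod>i\<in>s. p i) * (\<Prod>i\<in>U - s. 1 - p i)"

definition cc :: "(nat \<Rightarrow> real) \<Rightarrow> nat set \<Rightarrow> int \<Rightarrow> real" where
  "cc p U k = (\<Sum>s\<in>{s. s \<subseteq> U \<and> int (card s) = k}. wt p U s)"

lemma incl_part:
  assumes "finite U" "a \<notin> U"
  shows "(\<Sum>s\<in>{s. s \<subseteq> insert a U \<and> int (card s) = k \<and> a \<in> s}. wt p (insert a U) s)
         = p a * cc p U (k - 1)"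
proof -
  have seteq: "{s. s \<subseteq> insert a U \<and> int (card s) = k \<and> a \<in> s}
        = insert a ` {t. t \<subseteq> U \<and> int (card t) = k - 1}"
  proof (intro set_eqI iffI)
    fix s assume s: "s \<in> {s. s \<subseteq> insert a U \<and> int (card s) = k \<and> a \<in> s}"
    hence fs: "finite s" using assms(1) finite_subset by auto
    have "s - {a} \<subseteq> U" using s by auto
    moreover have "int (card (s - {a})) = k - 1"
    proof -
      have "card s > 0" using fs s by (auto simp: card_gt_0_iff)
      thus ?thesis using s fs by (simp add: card_Diff_singleton of_nat_diff)
    qed
    moreover have "s = insert a (s - {a})" using s by auto
    ultimately show "s \<in> insert a ` {t. t \<subseteq> U \<and> int (card t) = k - 1}" by blast
  next
    fix s assume "s \<in> insert a ` {t. t \<subseteq> U \<and> int (card t) = k - 1}"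
    then obtain t where t: "t \<subseteq> U" "int (card t) = k - 1" "s = insert a t" by auto
    have "finite t" using t assms(1) finite_subset by auto
    moreover have "a \<notin> t" using t assms by auto
    ultimately show "s \<in> {s. s \<subseteq> insert a U \<and> int (card s) = k \<and> a \<in> s}" using t by auto
  qed
  have inj: "inj_on (insert a) {t. t \<subseteq> U \<and> int (card t) = k - 1}"
    unfolding inj_on_def using assms(2) by (metis (no_types, lifting) insert_ident mem_Collect_eq subsetD)
  have w: "wt p (insert a U) (insert a t) = p a * wt p U t" if "t \<subseteq> U" for t
  proof -
    have "finite t" using that assms(1) finite_subset by auto
    moreover have "a \<notin> t" using that assms by auto
    moreover have "insert a U - insert a t = U - t" using assms(2) by auto
    ultimately show ?thesis unfolding wt_def using assms by simp
  qed
  show ?thesis unfolding seteq cc_def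
    by (simp add: sum.reindex[OF inj] w sum_distrib_left)
qed

lemma excl_part:
  assumes "finite U" "a \<notin> U"
  shows "(\<Sum>s\<in>{s. s \<subseteq> insert a U \<and> int (card s) = k \<and> a \<notin> s}. wt p (insert a U) s)
         = (1 - p a) * cc p U k"
proof -
  have seteq: "{s. s \<subseteq> insert a U \<and> int (card s) = k \<and> a \<notin> s} = {s. s \<subseteq> U \<and> int (card s) = k}"
    using assms by auto
  have w: "wt p (insert a U) s = (1 - p a) * wt p U s" if "s \<subseteq> U" for s
  proof -
    have "insert a U - s = insert a (U - s)" using that assms by auto
    moreover have "a \<notin> U - s" using assms by auto
    ultimately show ?thesis unfolding wt_def using assms by simp
  qed
  show ?thesis unfolding seteq cc_def by (simp add: w sum_distrib_left)
qed

lemma cc_rec: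
  assumes "finite U" "a \<notin> U"
  shows "cc p (insert a U) k = p a * cc p U (k - 1) + (1 - p a) * cc p U k"
proof -
  have fin: "finite {s. s \<subseteq> insert a U \<and> int (card s) = k}" using assms by simp
  have "cc p (insert a U) k = (\<Sum>s\<in>{s. s \<subseteq> insert a U \<and> int (card s) = k \<and> a \<in> s}. wt p (insert a U) s)
     + (\<Sum>s\<in>{s. s \<subseteq> insert a U \<and> int (card s) = k \<and> a \<notin> s}. wt p (insert a U) s)"
    unfolding cc_def
  proof -
    have e: "{s. s \<subseteq> insert a U \<and> int (card s) = k} = {s. s \<subseteq> insert a U \<and> int (card s) = k \<and> a \<in> s}
       \<union> {s. s \<subseteq> insert a U \<and> int (card s) = k \<and> a \<notin> s}" by auto
    show "(\<Sum>s\<in>{s. s \<subseteq> insert a U \<and> int (card s) = k}. wt p (insert a U) s) = (\<Sum>s\<in>{s. s \<subseteq> insert a U \<and> int (card s) = k \<and> a \<in> s}. wt p (insert a U) s)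
     + (\<Sum>s\<in>{s. s \<subseteq> insert a U \<and> int (card s) = k \<and> a \<notin> s}. wt p (insert a U) s)"
      unfolding e by (rule sum.union_disjoint) (use fin in \<open>auto intro: finite_subset[OF _ fin]\<close>)
  qed
  thus ?thesis using incl_part[OF assms] excl_part[OF assms] by simp
qed

lemma cc_empty: "cc p {} k = (if k = 0 then 1 else 0)"
proof -
  have "{s. s \<subseteq> ({}::nat set) \<and> int (card s) = k} = (if k = 0 then {{}} else {})" by auto
  thus ?thesis unfolding cc_def wt_def by simp
qed

lemma cc_nonneg:
  assumes "\<And>i. i \<in> U \<Longrightarrow> 0 \<le> p i \<and> p i \<le> 1"
  shows "0 \<le> cc p U k"
  unfolding cc_def wt_def
proof (rule sum_nonneg)
  fix s assume "s \<in> {s. s \<subseteq> U \<and> int (card s) = k}"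
  hence "s \<subseteq> U" by simp
  hence "0 \<le> (\<Prod>i\<in>s. p i)" "0 \<le> (\<Prod>i\<in>U - s. 1 - p i)"
    using assms by (auto intro!: prod_nonneg)
  thus "0 \<le> (\<Prod>i\<in>s. p i) * (\<Prod>i\<in>U - s. 1 - p i)" by simp
qed

lemma cc_out:
  assumes "finite U" "k < 0 \<or> k > int (card U)"
  shows "cc p U k = 0"
proof -
  have e: "{s. s \<subseteq> U \<and> int (card s) = k} = {}"
  proof (rule ccontr)
    assume "{s. s \<subseteq> U \<and> int (card s) = k} \<noteq> {}"
    then obtain s where "s \<subseteq> U" "int (card s) = k" by blast
    moreover have "card s \<le> card U" using card_mono[OF assms(1) \<open>s \<subseteq> U\<close>] .
    ultimately show False using assms(2) by linarith
  qed
  show ?thesis unfolding cc_def e by simp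
qed

lemma cc_pos:
  assumes "finite U" "\<And>i. i \<in> U \<Longrightarrow> 0 < p i \<and> p i < 1" "0 \<le> k" "k \<le> int (card U)"
  shows "0 < cc p U k"
  using assms
proof (induction U arbitrary: k rule: finite_induct)
  case empty
  thus ?case by (simp add: cc_empty)
next
  case (insert a U)
  have pa: "0 < p a" "p a < 1" using insert.prems by auto
  have nn: "0 \<le> cc p U j" for j by (rule cc_nonneg) (use insert.prems in force)
  have rec: "cc p (insert a U) k = p a * cc p U (k - 1) + (1 - p a) * cc p U k"
    by (rule cc_rec) (use insert in auto)
  show ?case
  proof (cases "k \<le> int (card U)")
    case True
    have "0 < cc p U k" by (rule insert.IH) (use insert.prems True in auto)
    thus ?thesis unfolding rec using pa nn[of "k-1"] by (simp add: add_nonneg_pos)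
  next
    case False
    have "0 < cc p U (k - 1)" by (rule insert.IH) (use insert.prems insert.hyps False in auto)
    thus ?thesis unfolding rec using pa nn[of "k"] by (simp add: add_pos_nonneg)
  qed
qed

lemma cross_lc:
  fixes c :: "int \<Rightarrow> real"
  assumes nn: "\<And>j. 0 \<le> c j" and pos: "\<And>j. 0 < c j \<longleftrightarrow> 0 \<le> j \<and> j \<le> m"
    and lc: "\<And>j. c (j - 1) * c (j + 1) \<le> c j ^ 2"
  shows "c (k - 2) * c (k + 1) \<le> c (k - 1) * c k"
proof (cases "c (k - 2) = 0 \<or> c (k + 1) = 0")
  case True
  thus ?thesis using nn[of "k-1"] nn[of k] by auto
next
  case False
  hence "0 < c (k-2)" "0 < c (k+1)" using nn[of "k-2"] nn[of "k+1"] by auto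
  hence "0 \<le> k - 2" "k + 1 \<le> m" using pos[of "k-2"] pos[of "k+1"] by auto
  hence p1: "0 < c (k - 1)" and p2: "0 < c k" using pos[of "k-1"] pos[of k] by auto
  have l1: "c (k - 2) * c k \<le> c (k - 1) ^ 2" using lc[of "k - 1"] by (simp add: algebra_simps)
  have l2: "c (k - 1) * c (k + 1) \<le> c k ^ 2" using lc[of k] by simp
  have "(c (k - 2) * c (k + 1)) * (c (k - 1) * c k) = (c (k - 2) * c k) * (c (k - 1) * c (k + 1))"
    by (simp add: algebra_simps)
  also have "\<dots> \<le> c (k - 1) ^ 2 * c k ^ 2"
    by (rule mult_mono[OF l1 l2]) (use nn in \<open>auto intro: mult_nonneg_nonneg\<close>)
  also have "\<dots> = (c (k - 1) * c k) * (c (k - 1) * c k)" by (simp add: power2_eq_square algebra_simps)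
  finally show ?thesis using p1 p2 by (simp add: mult_le_cancel_right)
qed

lemma cc_lc:
  assumes "finite U" "\<And>i. i \<in> U \<Longrightarrow> 0 < p i \<and> p i < 1"
  shows "cc p U (k - 1) * cc p U (k + 1) \<le> cc p U k ^ 2"
  using assms
proof (induction U arbitrary: k rule: finite_induct)
  case empty
  thus ?case by (simp add: cc_empty)
next
  case (insert a U)
  let ?c = "cc p U"
  have pa: "0 < p a" "p a < 1" using insert.prems by auto
  have nn: "\<And>j. 0 \<le> ?c j" by (rule cc_nonneg) (use insert.prems in force)
  have pos: "\<And>j. 0 < ?c j \<longleftrightarrow> 0 \<le> j \<and> j \<le> int (card U)"
  proof -
    fix j show "0 < ?c j \<longleftrightarrow> 0 \<le> j \<and> j \<le> int (card U)"
      using cc_pos[OF insert.hyps(1), of p j] cc_out[OF insert.hyps(1), of j p] insert.prems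
      by (cases "0 \<le> j \<and> j \<le> int (card U)") auto
  qed
  have lc: "\<And>j. ?c (j - 1) * ?c (j + 1) \<le> ?c j ^ 2" using insert by auto
  have cr: "?c (k - 2) * ?c (k + 1) \<le> ?c (k - 1) * ?c k"
    by (rule cross_lc[OF nn pos lc])
  have rec: "\<And>j. cc p (insert a U) j = p a * ?c (j - 1) + (1 - p a) * ?c j"
    by (rule cc_rec) (use insert in auto)
  have l1: "?c (k - 2) * ?c k \<le> ?c (k - 1) ^ 2" using lc[of "k - 1"] by (simp add: algebra_simps)
  have l2: "?c (k - 1) * ?c (k + 1) \<le> ?c k ^ 2" using lc[of k] by simp
  define A where "A = ?c (k - 2)" define B where "B = ?c (k - 1)"
  define C where "C = ?c k" define D where "D = ?c (k + 1)"
  have e1: "k - 1 - 1 = k - 2" "k + 1 - 1 = k" "k - 1 + 1 = k" by auto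
  have "cc p (insert a U) k ^ 2 - cc p (insert a U) (k - 1) * cc p (insert a U) (k + 1)
      = p a ^ 2 * (B^2 - A * C) + (1 - p a)^2 * (C^2 - B * D) + p a * (1 - p a) * (B * C - A * D)"
    unfolding rec e1 A_def B_def C_def D_def by (simp add: algebra_simps power2_eq_square)
  also have "\<dots> \<ge> 0"
    using l1 l2 cr pa unfolding A_def B_def C_def D_def
    by (intro add_nonneg_nonneg mult_nonneg_nonneg) auto
  finally show ?case by simp
qed

lemma cc_shift_sum:
  assumes "finite U" "a \<notin> U"
  shows "(\<Sum>k=0..Suc (card U). f k * cc p (insert a U) (int k))
       = p a * (\<Sum>k=0..card U. f (Suc k) * cc p U (int k)) + (1 - p a) * (\<Sum>k=0..card U. f k * cc p U (int k))"
proof -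
  let ?m = "card U"
  have "(\<Sum>k=0..Suc ?m. f k * cc p (insert a U) (int k))
      = (\<Sum>k=0..Suc ?m. p a * (f k * cc p U (int k - 1)) + (1 - p a) * (f k * cc p U (int k)))"
    by (rule sum.cong) (simp_all add: cc_rec[OF assms] algebra_simps)
  also have "\<dots> = p a * (\<Sum>k=0..Suc ?m. f k * cc p U (int k - 1)) + (1 - p a) * (\<Sum>k=0..Suc ?m. f k * cc p U (int k))"
    by (simp add: sum.distrib sum_distrib_left del: sum.cl_ivl_Suc)
  also have "(\<Sum>k=0..Suc ?m. f k * cc p U (int k - 1)) = (\<Sum>k=0..?m. f (Suc k) * cc p U (int k))"
  proof -
    have "(\<Sum>k=0..Suc ?m. f k * cc p U (int k - 1)) = f 0 * cc p U (int 0 - 1) + (\<Sum>k=0..?m. f (Suc k) * cc p U (int (Suc k) - 1))"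
      by (simp only: sum.atLeast0_atMost_Suc_shift comp_def)
    moreover have "cc p U (int 0 - 1) = 0" by (rule cc_out) (use assms in auto)
    ultimately show ?thesis by simp
  qed
  also have "(\<Sum>k=0..Suc ?m. f k * cc p U (int k)) = (\<Sum>k=0..?m. f k * cc p U (int k))"
  proof -
    have "cc p U (int (Suc ?m)) = 0" by (rule cc_out) (use assms in auto)
    thus ?thesis by (simp add: sum.atLeast0_atMost_Suc)
  qed
  finally show ?thesis .
qed

lemma cc_moments:
  assumes "finite U"
  shows "(\<Sum>k=0..card U. cc p U (int k)) = 1 \<and>
         (\<Sum>k=0..card U. real k * cc p U (int k)) = (\<Sum>i\<in>U. p i) \<and>
         (\<Sum>k=0..card U. real k ^ 2 * cc p U (int k)) = (\<Sum>i\<in>U. p i) ^ 2 + (\<Sum>i\<in>U. p i * (1 - p i))"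
  using assms
proof (induction U rule: finite_induct)
  case empty
  thus ?case by (simp add: cc_empty)
next
  case (insert a U)
  let ?m = "card U"
  have cI: "card (insert a U) = Suc ?m" using insert by simp
  have S0: "(\<Sum>k=0..Suc ?m. cc p (insert a U) (int k)) = 1"
    using cc_shift_sum[OF insert.hyps, of "\<lambda>k. 1" p] insert.IH by simp
  have S1: "(\<Sum>k=0..Suc ?m. real k * cc p (insert a U) (int k)) = p a + (\<Sum>i\<in>U. p i)"
  proof -
    have "(\<Sum>k=0..?m. real (Suc k) * cc p U (int k)) = (\<Sum>k=0..?m. cc p U (int k)) + (\<Sum>k=0..?m. real k * cc p U (int k))"
      by (simp add: sum.distrib algebra_simps)
    thus ?thesis using cc_shift_sum[OF insert.hyps, of "\<lambda>k. real k" p] insert.IH by (simp add: algebra_simps)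
  qed
  have S2: "(\<Sum>k=0..Suc ?m. real k ^ 2 * cc p (insert a U) (int k)) = (p a + (\<Sum>i\<in>U. p i)) ^ 2 + (p a * (1 - p a) + (\<Sum>i\<in>U. p i * (1 - p i)))"
  proof -
    have "(\<Sum>k=0..?m. real (Suc k) ^ 2 * cc p U (int k)) = (\<Sum>k=0..?m. real k ^ 2 * cc p U (int k)) + 2 * (\<Sum>k=0..?m. real k * cc p U (int k)) + (\<Sum>k=0..?m. cc p U (int k))"
      by (simp add: sum.distrib sum_distrib_left algebra_simps power2_eq_square)
    thus ?thesis using cc_shift_sum[OF insert.hyps, of "\<lambda>k. real k ^ 2" p] insert.IH
      by (simp add: algebra_simps power2_eq_square)
  qed
  show ?case unfolding cI using S0 S1 S2 insert.hyps by simp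
qed

lemma cc_ident:
  assumes "finite U"
  shows "(of_int k - (\<Sum>i\<in>U. p i)) * cc p U k
       = (\<Sum>j\<in>U. p j * (1 - p j) * (cc p (U - {j}) (k - 1) - cc p (U - {j}) k))"
  using assms
proof (induction U arbitrary: k rule: finite_induct)
  case empty
  thus ?case by (simp add: cc_empty)
next
  case (insert a U)
  let ?q = "1 - p a"
  have rec: "\<And>t. cc p (insert a U) t = p a * cc p U (t - 1) + ?q * cc p U t"
    by (rule cc_rec) (use insert in auto)
  have recj: "\<And>j t. j \<in> U \<Longrightarrow> cc p (insert a U - {j}) t = p a * cc p (U - {j}) (t - 1) + ?q * cc p (U - {j}) t"
  proof -
    fix j t assume j: "j \<in> U"
    have "insert a U - {j} = insert a (U - {j})" using j insert.hyps by auto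
    thus "cc p (insert a U - {j}) t = p a * cc p (U - {j}) (t - 1) + ?q * cc p (U - {j}) t"
      using cc_rec[of "U - {j}" a p t] insert.hyps by auto
  qed
  have e: "insert a U - {a} = U" using insert.hyps by auto
  have "(\<Sum>j\<in>insert a U. p j * (1 - p j) * (cc p (insert a U - {j}) (k - 1) - cc p (insert a U - {j}) k))
      = p a * ?q * (cc p U (k - 1) - cc p U k)
        + (\<Sum>j\<in>U. p j * (1 - p j) * (cc p (insert a U - {j}) (k - 1) - cc p (insert a U - {j}) k))"
    using insert.hyps e by (simp add: sum.insert)
  also have "(\<Sum>j\<in>U. p j * (1 - p j) * (cc p (insert a U - {j}) (k - 1) - cc p (insert a U - {j}) k))
      = p a * (\<Sum>j\<in>U. p j * (1 - p j) * (cc p (U - {j}) (k - 1 - 1) - cc p (U - {j}) (k - 1)))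
        + ?q * (\<Sum>j\<in>U. p j * (1 - p j) * (cc p (U - {j}) (k - 1) - cc p (U - {j}) k))"
    by (simp add: recj sum_distrib_left sum.distrib[symmetric] algebra_simps cong: sum.cong)
  also have "\<dots> = p a * ((of_int (k - 1) - (\<Sum>i\<in>U. p i)) * cc p U (k - 1)) + ?q * ((of_int k - (\<Sum>i\<in>U. p i)) * cc p U k)"
    using insert.IH[of "k - 1"] insert.IH[of k] by simp
  finally show ?case using insert.hyps by (simp add: rec algebra_simps)
qed



lemma tel:
  fixes w h :: "nat \<Rightarrow> real" and t :: real
  shows "(\<Sum>y<L. h y * (t * w y - w (Suc y))) + t * h L * w L
       = t * h 0 * w 0 + (\<Sum>y<L. (t * h (Suc y) - h y) * w (Suc y))"
  by (induction L) (simp_all add: algebra_simps)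

lemma tel_nonneg:
  fixes w h :: "nat \<Rightarrow> real" and t :: real
  assumes "\<And>y. 0 \<le> h y" "0 \<le> t" "\<And>y. 0 \<le> w y" "\<And>y. y < L \<Longrightarrow> w (Suc y) \<le> t * w y"
  shows "0 \<le> t * h 0 * w 0 + (\<Sum>y<L. (t * h (Suc y) - h y) * w (Suc y))"
proof -
  have "0 \<le> (\<Sum>y<L. h y * (t * w y - w (Suc y))) + t * h L * w L"
    using assms by (intro add_nonneg_nonneg sum_nonneg mult_nonneg_nonneg) auto
  thus ?thesis by (simp only: tel)
qed

lemma geo1:
  fixes w :: "nat \<Rightarrow> real" and t :: real
  assumes "0 \<le> t" "t < 1" "\<And>y. 0 \<le> w y" "\<And>y. y < L \<Longrightarrow> w (Suc y) \<le> t * w y"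
  shows "(\<Sum>y<L. real (Suc y) * w (Suc y)) \<le> t / (1 - t)^2 * w 0"
proof -
  define h where "h y = 1 / (1 - t)^2 + real y / (1 - t)" for y
  have hn: "0 \<le> h y" for y using assms(2) unfolding h_def by auto
  have nn: "0 \<le> t * h 0 * w 0 + (\<Sum>y<L. (t * h (Suc y) - h y) * w (Suc y))"
    by (rule tel_nonneg[where h=h and w=w and t=t and L=L]) (use hn assms in auto)
  have hid: "t * h (Suc y) - h y = - real (Suc y)" for y
  proof -
    have "1 - t \<noteq> 0" using assms by auto
    hence s: "1 - t \<noteq> 0" .
    have "t * h (Suc y) - h y = ((1 - (1-t)) * (1 + (real y + 1) * (1 - t)) - 1 - real y * (1 - t)) / (1 - t)^2"
      unfolding h_def using s by (simp add: field_simps power2_eq_square)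
    also have "(1 - (1-t)) * (1 + (real y + 1) * (1 - t)) - 1 - real y * (1 - t) = - (real y + 1) * (1 - t)^2"
      by (simp add: algebra_simps power2_eq_square)
    finally show ?thesis using s by simp
  qed
  have "(\<Sum>y<L. (t * h (Suc y) - h y) * w (Suc y)) = (\<Sum>y<L. - (real (Suc y) * w (Suc y)))"
    by (rule sum.cong) (simp_all only: hid mult_minus_left)
  also have "\<dots> = - (\<Sum>y<L. real (Suc y) * w (Suc y))" by (rule sum_negf)
  finally have e: "(\<Sum>y<L. (t * h (Suc y) - h y) * w (Suc y)) = - (\<Sum>y<L. real (Suc y) * w (Suc y))" .
  have "t * h 0 = t / (1 - t)^2" unfolding h_def by simp
  thus ?thesis using nn e by simp
qed

lemma geo2:
  fixes w :: "nat \<Rightarrow> real" and t :: real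
  assumes "0 \<le> t" "\<And>y. 0 \<le> w y" "\<And>y. y < L \<Longrightarrow> w (Suc y) \<le> t * w y"
  shows "(1 - t) * (\<Sum>y<L. real (Suc y) * real y * w (Suc y)) \<le> 2 * t * (\<Sum>y<L. real (Suc y) * w (Suc y))"
proof -
  define h where "h y = real y * (real y + 1)" for y
  have hn: "0 \<le> h y" for y unfolding h_def by auto
  have "0 \<le> t * h 0 * w 0 + (\<Sum>y<L. (t * h (Suc y) - h y) * w (Suc y))"
    by (rule tel_nonneg[where h=h and w=w and t=t and L=L]) (use hn assms in auto)
  moreover have hid: "t * h (Suc y) - h y = 2 * t * real (Suc y) - (1 - t) * (real (Suc y) * real y)" for y
    unfolding h_def by (simp add: algebra_simps)
  moreover have "(\<Sum>y<L. (t * h (Suc y) - h y) * w (Suc y)) = (\<Sum>y<L. 2 * t * (real (Suc y) * w (Suc y)) - (1 - t) * (real (Suc y) * real y * w (Suc y)))"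
    by (rule sum.cong) (simp_all only: hid left_diff_distrib mult.assoc)
  moreover have "\<dots> = 2 * t * (\<Sum>y<L. real (Suc y) * w (Suc y)) - (1 - t) * (\<Sum>y<L. real (Suc y) * real y * w (Suc y))"
    by (simp only: sum_subtractf sum_distrib_left)
  moreover have "t * h 0 * w 0 = 0" unfolding h_def by simp
  ultimately show ?thesis by linarith
qed

lemma ratio_prop:
  fixes w :: "nat \<Rightarrow> real" and r :: real
  assumes pos: "\<And>y. y \<le> L \<Longrightarrow> 0 < w y"
    and lc: "\<And>y. y + 2 \<le> L \<Longrightarrow> w y * w (y + 2) \<le> w (Suc y) ^ 2"
    and base: "w 1 \<le> r * w 0"
  shows "y < L \<Longrightarrow> w (Suc y) \<le> r * w y"
proof (induction y)
  case 0
  thus ?case using base by simp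
next
  case (Suc y)
  have ih: "w (Suc y) \<le> r * w y" using Suc by simp
  have l: "w y * w (Suc (Suc y)) \<le> w (Suc y) ^ 2" using lc[of y] Suc.prems by (simp add: numeral_2_eq_2)
  have p0: "0 < w y" "0 < w (Suc y)" using pos Suc.prems by auto
  have "w y * w (Suc (Suc y)) \<le> w (Suc y) * w (Suc y)" using l by (simp add: power2_eq_square)
  also have "\<dots> \<le> w (Suc y) * (r * w y)" using ih p0(2) by (rule mult_left_mono[OF _ less_imp_le]) 
  also have "\<dots> = w y * (r * w (Suc y))" by (simp add: algebra_simps)
  finally have "w y * w (Suc (Suc y)) \<le> w y * (r * w (Suc y))" .
  thus ?case using p0 by (simp add: mult_le_cancel_left_pos)
qed

lemma split_sum:
  fixes g :: "nat \<Rightarrow> real"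
  assumes "m \<le> M"
  shows "(\<Sum>k=0..M. g k) = g m + (\<Sum>y<m. g (m - Suc y)) + (\<Sum>y<M - m. g (m + Suc y))"
proof -
  have e1: "{0..M} = {..<m} \<union> insert m {m<..M}" using assms by auto
  have "(\<Sum>k=0..M. g k) = (\<Sum>k<m. g k) + (g m + (\<Sum>k\<in>{m<..M}. g k))"
    unfolding e1 by (subst sum.union_disjoint) auto
  moreover have "(\<Sum>k<m. g k) = (\<Sum>y<m. g (m - Suc y))" by (rule sum.nat_diff_reindex[symmetric])
  moreover have "(\<Sum>k\<in>{m<..M}. g k) = (\<Sum>y<M - m. g (m + Suc y))"
    by (rule sum.reindex_bij_witness[where j="\<lambda>k. k - m - 1" and i="\<lambda>y. m + Suc y"]) auto
  ultimately show ?thesis by simp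
qed



lemma small_var:
  fixes c :: "nat \<Rightarrow> real" and m M :: nat and q T :: real
  assumes mM: "m < M"
    and nn: "\<And>k. 0 \<le> c k" and pos: "\<And>k. k \<le> M \<Longrightarrow> 0 < c k"
    and lc: "\<And>k. k + 2 \<le> M \<Longrightarrow> c k * c (k + 2) \<le> c (Suc k) ^ 2"
    and s0: "(\<Sum>k=0..M. c k) = 1"
    and s1: "(\<Sum>k=0..M. (real k - real m) * c k) = q"
    and s2: "(\<Sum>k=0..M. (real k - real m) * (real k - real m - 1) * c k) = T"
    and q: "0 \<le> q"
    and big: "6 * c (Suc m) \<le> c m"
  shows "T + q - q^2 < 3/4"
proof -
  define L where "L = M - m"
  define w where "w y = c (m + y)" for y
  define u where "u y = c (m - y)" for y
  have wnn: "\<And>y. 0 \<le> w y" and unn: "\<And>y. 0 \<le> u y" unfolding w_def u_def using nn by auto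
  have wr: "w (Suc y) \<le> (1/6) * w y" if "y < L" for y
  proof (rule ratio_prop[where L=L])
    show "\<And>y. y \<le> L \<Longrightarrow> 0 < w y" unfolding w_def L_def using pos mM by auto
    show "\<And>y. y + 2 \<le> L \<Longrightarrow> w y * w (y + 2) \<le> w (Suc y) ^ 2"
      unfolding w_def L_def using lc[of "m + _"] by (simp add: add.assoc)
    show "w 1 \<le> 1 / 6 * w 0" unfolding w_def using big by simp
    show "y < L" by fact
  qed
  define A where "A = (\<Sum>y<L. real (Suc y) * w (Suc y))"
  define TR where "TR = (\<Sum>y<L. real (Suc y) * real y * w (Suc y))"
  have A: "A \<le> (1/6) / (1 - 1/6)^2 * w 0" unfolding A_def
    by (rule geo1) (use wnn wr in auto)
  have TR: "(1 - 1/6) * TR \<le> 2 * (1/6) * A" unfolding A_def TR_def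
    by (rule geo2) (use wnn wr in auto)
  define B where "B = (\<Sum>y<m. real (Suc y) * u (Suc y))"
  define TL where "TL = (\<Sum>y<m. real (Suc y) * real y * u (Suc y))"
  have Bnn: "0 \<le> B" unfolding B_def using unn by (auto intro!: sum_nonneg)
  have sp: "(\<Sum>k=0..M. g k) = g m + (\<Sum>y<m. g (m - Suc y)) + (\<Sum>y<L. g (m + Suc y))" for g :: "nat \<Rightarrow> real"
    unfolding L_def by (rule split_sum) (use mM in auto)
  have qAB: "q = A - B"
  proof -
    have "q = 0 + (\<Sum>y<m. - (real (Suc y) * u (Suc y))) + (\<Sum>y<L. real (Suc y) * w (Suc y))"
      unfolding s1[symmetric] sp
      by (intro arg_cong2[where f="(+)"] sum.cong refl) (auto simp: u_def w_def of_nat_diff algebra_simps)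
    thus ?thesis unfolding A_def B_def by (simp add: sum_negf)
  qed
  have TT: "T = TL + 2 * B + TR"
  proof -
    have "T = 0 + (\<Sum>y<m. real (Suc y) * real y * u (Suc y) + 2 * (real (Suc y) * u (Suc y))) + TR"
      unfolding s2[symmetric] sp TR_def
      by (intro arg_cong2[where f="(+)"] sum.cong refl) (auto simp: u_def w_def of_nat_diff algebra_simps)
    thus ?thesis unfolding TL_def B_def by (simp add: sum.distrib sum_distrib_left)
  qed
  have cm1: "c m \<le> 1"
  proof -
    have "c m \<le> (\<Sum>k=0..M. c k)" by (rule member_le_sum) (use nn mM in auto)
    thus ?thesis using s0 by simp
  qed
  have A': "A \<le> 6/25 * c m" using A unfolding w_def by (simp add: power2_eq_square)
  have ur: "u (Suc y) \<le> (6/25) * u y" if "y < m" for y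
  proof (rule ratio_prop[where L=m])
    show "\<And>y. y \<le> m \<Longrightarrow> 0 < u y" unfolding u_def using pos mM by auto
    show "\<And>y. y + 2 \<le> m \<Longrightarrow> u y * u (y + 2) \<le> u (Suc y) ^ 2"
    proof -
      fix y assume y: "y + 2 \<le> m"
      have e: "m - y = (m - (y + 2)) + 2" "m - Suc y = Suc (m - (y + 2))" using y by auto
      have "c (m - (y + 2)) * c (m - (y + 2) + 2) \<le> c (Suc (m - (y + 2))) ^ 2"
        by (rule lc) (use y mM in auto)
      thus "u y * u (y + 2) \<le> u (Suc y) ^ 2" unfolding u_def e by (simp add: mult.commute)
    qed
    show "u 1 \<le> 6 / 25 * u 0"
    proof -
      have "real (Suc 0) * u (Suc 0) \<le> B" unfolding B_def
        by (rule member_le_sum) (use unn that in auto)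
      thus ?thesis using qAB q A' unfolding u_def by simp
    qed
    show "y < m" by fact
  qed
  have TL: "(1 - 6/25) * TL \<le> 2 * (6/25) * B" unfolding TL_def B_def
    by (rule geo2) (use unn ur in auto)
  have q2: "0 \<le> q^2" by simp
  have t1: "TL \<le> 12/19 * B" using TL by simp
  have t2: "TR \<le> 2/5 * A" using TR by simp
  have t3: "T \<le> 50/19 * B + 2/5 * A" using TT t1 t2 by simp
  have t4: "A \<le> 6/25" using A' cm1 by simp
  have t5: "T + q \<le> 73/100" using t3 t4 qAB q by linarith
  show ?thesis using t5 q2 by linarith
qed



lemma term_up:
  fixes pp a2 a1 b1 cn cn1 :: real
  assumes pp: "0 < pp" "pp < 1" and lc: "a2 * b1 \<le> a1^2"
    and cn: "cn = pp*a1 + (1-pp)*b1" and cn1: "cn1 = pp*a2 + (1-pp)*a1" and pos: "0 < cn" "0 \<le> cn1"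
  shows "cn * (cn1/cn - 1) / ((1-pp) + pp*(cn1/cn)) \<le> a1 - b1"
proof -
  define Dn where "Dn = (1-pp)*cn + pp*cn1"
  have Dp: "0 < Dn" unfolding Dn_def using pp pos by (simp add: add_pos_nonneg)
  have d1: "(1-pp) + pp*(cn1/cn) = Dn/cn" unfolding Dn_def using pos by (simp add: field_simps)
  have d2: "cn * (cn1/cn - 1) = cn1 - cn" using pos by (simp add: field_simps)
  have e: "cn * (cn1/cn - 1) / ((1-pp) + pp*(cn1/cn)) = cn * (cn1 - cn) / Dn"
    unfolding d1 d2 using pos Dp by (simp add: field_simps)
  have "(a1 - b1) * Dn - cn * (cn1 - cn) = pp * (a1^2 - a2 * b1)"
    unfolding Dn_def cn cn1 by (simp add: algebra_simps power2_eq_square)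
  moreover have "0 \<le> pp * (a1^2 - a2 * b1)" using pp lc by simp
  ultimately have "cn * (cn1 - cn) \<le> (a1 - b1) * Dn" by linarith
  thus ?thesis unfolding e using Dp by (simp add: pos_divide_le_eq)
qed

lemma term_low:
  fixes pp a2 a1 b1 cn cn1 :: real
  assumes pp: "0 < pp" "pp < 1" and lc: "a2 * b1 \<le> a1^2"
    and cn: "cn = pp*a1 + (1-pp)*b1" and cn1: "cn1 = pp*a2 + (1-pp)*a1" and pos: "0 < cn" "0 \<le> cn1"
  shows "a2 - a1 \<le> cn1 * (cn1/cn - 1) / ((1-pp) + pp*(cn1/cn))"
proof -
  define Dn where "Dn = (1-pp)*cn + pp*cn1"
  have Dp: "0 < Dn" unfolding Dn_def using pp pos by (simp add: add_pos_nonneg)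
  have d1: "(1-pp) + pp*(cn1/cn) = Dn/cn" unfolding Dn_def using pos by (simp add: field_simps)
  have d2: "cn1 * (cn1/cn - 1) = cn1 * (cn1 - cn) / cn" using pos by (simp add: field_simps)
  have e: "cn1 * (cn1/cn - 1) / ((1-pp) + pp*(cn1/cn)) = cn1 * (cn1 - cn) / Dn"
    unfolding d1 d2 using pos Dp by (simp add: field_simps)
  have "cn1 * (cn1 - cn) - (a2 - a1) * Dn = (1 - pp) * (a1^2 - a2 * b1)"
    unfolding Dn_def cn cn1 by (simp add: algebra_simps power2_eq_square)
  moreover have "0 \<le> (1 - pp) * (a1^2 - a2 * b1)" using pp lc by simp
  ultimately have "(a2 - a1) * Dn \<le> cn1 * (cn1 - cn)" by linarith
  thus ?thesis unfolding e using Dp by (simp add: pos_le_divide_eq)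
qed



lemma link:
  assumes "i \<in> {1..N}"
  shows "rej_incl N n p i = p i * cc p ({1..N} - {i}) (int n - 1)
          / (p i * cc p ({1..N} - {i}) (int n - 1) + (1 - p i) * cc p ({1..N} - {i}) (int n))"
proof -
  define U' where "U' = {1..N} - {i}"
  have fU: "finite U'" and iU: "i \<notin> U'" unfolding U'_def by auto
  have insU: "insert i U' = {1..N}" unfolding U'_def using assms by auto
  have Z: "(\<Sum>t\<in>rej_samples N n. rej_weight N p t) = cc p {1..N} (int n)"
    unfolding rej_samples_def cc_def rej_weight_def wt_def by simp
  have Z2: "cc p {1..N} (int n) = p i * cc p U' (int n - 1) + (1 - p i) * cc p U' (int n)"
    unfolding insU[symmetric] by (rule cc_rec[OF fU iU])
  have S: "{s \<in> rej_samples N n. i \<in> s} = {s. s \<subseteq> insert i U' \<and> int (card s) = int n \<and> i \<in> s}"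
    unfolding rej_samples_def insU by auto
  have "rej_incl N n p i = (\<Sum>s\<in>{s \<in> rej_samples N n. i \<in> s}. wt p (insert i U') s / cc p {1..N} (int n))"
    unfolding rej_incl_def
  proof (rule sum.cong)
    fix s assume "s \<in> {s \<in> rej_samples N n. i \<in> s}"
    hence "s \<in> rej_samples N n" by simp
    thus "rej_prob N n p s = wt p (insert i U') s / cc p {1..N} (int n)"
      unfolding rej_prob_def Z by (simp add: rej_weight_def wt_def insU)
  qed simp
  also have "\<dots> = (\<Sum>s\<in>{s \<in> rej_samples N n. i \<in> s}. wt p (insert i U') s) / cc p {1..N} (int n)"
    by (simp add: sum_divide_distrib)
  also have "(\<Sum>s\<in>{s \<in> rej_samples N n. i \<in> s}. wt p (insert i U') s) = p i * cc p U' (int n - 1)"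
    unfolding S by (rule incl_part[OF fU iU])
  finally show ?thesis unfolding Z2 U'_def .
qed

theorem mainTheorem6:
  fixes N n :: nat and p :: "nat \<Rightarrow> real"
  assumes "1 \<le> n" and "n \<le> N"
    and "\<And>i. i \<in> {1..N} \<Longrightarrow> 0 < p i \<and> p i < 1"
    and "(\<Sum>i=1..N. p i) = real n"
    and "(\<Sum>i=1..N. p i * (1 - p i)) \<ge> 1"
    and "i \<in> {1..N}"
  shows "\<bar>1 / rej_incl N n p i - 1 / p i\<bar>
           \<le> 6 / (\<Sum>j=1..N. p j * (1 - p j))
             * ((1 - rej_incl N n p i) / rej_incl N n p i)"
proof -
  note n1 = assms(1) and prange = assms(3) and sumn = assms(4) and iN = assms(6)
  define d where "d = (\<Sum>j=1..N. p j * (1 - p j))"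
  have d1: "1 \<le> d" using assms(5) unfolding d_def .
  define U' where "U' = {1..N} - {i}"
  have fU: "finite U'" and iU: "i \<notin> U'" unfolding U'_def by auto
  have insU: "insert i U' = {1..N}" unfolding U'_def using iN by auto
  have cardU: "card U' = N - 1" unfolding U'_def using iN by simp
  have pU: "\<And>j. j \<in> U' \<Longrightarrow> 0 < p j \<and> p j < 1" unfolding U'_def using prange by auto
  have pi: "0 < p i" "p i < 1" using prange iN by auto
  have ssplit: "(\<Sum>j=1..N. f j) = f i + (\<Sum>j\<in>U'. f j)" for f :: "nat \<Rightarrow> real"
    unfolding insU[symmetric] using fU iU by simp
  have mu: "(\<Sum>j\<in>U'. p j) = real n - p i" using ssplit[of p] sumn by simp
  define v where "v = (\<Sum>j\<in>U'. p j * (1 - p j))"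
  have vd: "v = d - p i * (1 - p i)" unfolding v_def d_def using ssplit[of "\<lambda>j. p j * (1 - p j)"] by simp
  have piq: "p i * (1 - p i) \<le> 1/4"
  proof -
    have "0 \<le> (p i - 1/2)^2" by simp
    thus ?thesis by (simp add: power2_eq_square algebra_simps)
  qed
  have piq0: "0 \<le> p i * (1 - p i)" using pi by simp
  have v34: "3/4 \<le> v" using vd d1 piq by linarith
  have nN: "n < N"
  proof -
    have "(\<Sum>j=1..N. p j) < (\<Sum>j=1..N. (1::real))"
      by (rule sum_strict_mono_ex1) (use prange iN in \<open>auto intro: less_imp_le\<close>)
    thus ?thesis using sumn by simp
  qed
  define c where "c = cc p U'"
  have cpos: "\<And>k. 0 \<le> k \<Longrightarrow> k \<le> int (N - 1) \<Longrightarrow> 0 < c k"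
    unfolding c_def using cc_pos[OF fU pU] cardU by auto
  have cn: "0 < c (int n)" by (rule cpos) (use nN in auto)
  have cn1: "0 < c (int n - 1)" by (rule cpos) (use nN n1 in auto)
  define x where "x = c (int n - 1) / c (int n)"
  have x0: "0 < x" unfolding x_def using cn cn1 by simp
  define F where "F = (\<Sum>j\<in>U'. p j * (1 - p j) * ((x - 1) / ((1 - p j) + p j * x)))"
  have recj: "\<And>j k. j \<in> U' \<Longrightarrow> c k = p j * cc p (U' - {j}) (k - 1) + (1 - p j) * cc p (U' - {j}) k"
  proof -
    fix j k assume j: "j \<in> U'"
    have "U' = insert j (U' - {j})" using j by auto
    hence "c k = cc p (insert j (U' - {j})) k" unfolding c_def by simp
    also have "\<dots> = p j * cc p (U' - {j}) (k - 1) + (1 - p j) * cc p (U' - {j}) k"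
      by (rule cc_rec) (use fU in auto)
    finally show "c k = p j * cc p (U' - {j}) (k - 1) + (1 - p j) * cc p (U' - {j}) k" .
  qed
  have lcj: "\<And>j. j \<in> U' \<Longrightarrow> cc p (U' - {j}) (int n - 1 - 1) * cc p (U' - {j}) (int n) \<le> cc p (U' - {j}) (int n - 1) ^ 2"
  proof -
    fix j assume j: "j \<in> U'"
    have "cc p (U' - {j}) ((int n - 1) - 1) * cc p (U' - {j}) ((int n - 1) + 1) \<le> cc p (U' - {j}) (int n - 1) ^ 2"
      by (rule cc_lc) (use fU pU in auto)
    thus "cc p (U' - {j}) (int n - 1 - 1) * cc p (U' - {j}) (int n) \<le> cc p (U' - {j}) (int n - 1) ^ 2" by simp
  qed
  have up: "F \<le> p i"
  proof -
    have id: "(of_int (int n) - (\<Sum>j\<in>U'. p j)) * c (int n)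
       = (\<Sum>j\<in>U'. p j * (1 - p j) * (cc p (U' - {j}) (int n - 1) - cc p (U' - {j}) (int n)))"
      unfolding c_def by (rule cc_ident[OF fU])
    have "c (int n) * F = (\<Sum>j\<in>U'. p j * (1 - p j) * (c (int n) * ((x - 1) / ((1 - p j) + p j * x))))"
      unfolding F_def by (simp add: sum_distrib_left algebra_simps)
    also have "\<dots> \<le> (\<Sum>j\<in>U'. p j * (1 - p j) * (cc p (U' - {j}) (int n - 1) - cc p (U' - {j}) (int n)))"
    proof (rule sum_mono)
      fix j assume j: "j \<in> U'"
      have pj: "0 < p j" "p j < 1" using pU j by auto
      have "c (int n) * (c (int n - 1) / c (int n) - 1) / ((1 - p j) + p j * (c (int n - 1) / c (int n)))
           \<le> cc p (U' - {j}) (int n - 1) - cc p (U' - {j}) (int n)"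
        by (rule term_up[OF pj lcj[OF j] recj[OF j] recj[OF j] cn less_imp_le[OF cn1]])
      hence "c (int n) * ((x - 1) / ((1 - p j) + p j * x)) \<le> cc p (U' - {j}) (int n - 1) - cc p (U' - {j}) (int n)"
        unfolding x_def by simp
      thus "p j * (1 - p j) * (c (int n) * ((x - 1) / ((1 - p j) + p j * x)))
          \<le> p j * (1 - p j) * (cc p (U' - {j}) (int n - 1) - cc p (U' - {j}) (int n))"
        using pj by (intro mult_left_mono) auto
    qed
    also have "\<dots> = p i * c (int n)" using id mu by simp
    finally show ?thesis using cn by (simp add: mult.commute)
  qed
  have low: "- (1 - p i) \<le> F"
  proof -
    have id: "(of_int (int n - 1) - (\<Sum>j\<in>U'. p j)) * c (int n - 1)
       = (\<Sum>j\<in>U'. p j * (1 - p j) * (cc p (U' - {j}) (int n - 1 - 1) - cc p (U' - {j}) (int n - 1)))"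
      unfolding c_def by (rule cc_ident[OF fU])
    have "- (1 - p i) * c (int n - 1) = (\<Sum>j\<in>U'. p j * (1 - p j) * (cc p (U' - {j}) (int n - 1 - 1) - cc p (U' - {j}) (int n - 1)))"
      using id mu by simp
    also have "\<dots> \<le> (\<Sum>j\<in>U'. p j * (1 - p j) * (c (int n - 1) * ((x - 1) / ((1 - p j) + p j * x))))"
    proof (rule sum_mono)
      fix j assume j: "j \<in> U'"
      have pj: "0 < p j" "p j < 1" using pU j by auto
      have "cc p (U' - {j}) (int n - 1 - 1) - cc p (U' - {j}) (int n - 1)
           \<le> c (int n - 1) * (c (int n - 1) / c (int n) - 1) / ((1 - p j) + p j * (c (int n - 1) / c (int n)))"
        by (rule term_low[OF pj lcj[OF j] recj[OF j] recj[OF j] cn less_imp_le[OF cn1]])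
      hence "cc p (U' - {j}) (int n - 1 - 1) - cc p (U' - {j}) (int n - 1) \<le> c (int n - 1) * ((x - 1) / ((1 - p j) + p j * x))"
        unfolding x_def by simp
      thus "p j * (1 - p j) * (cc p (U' - {j}) (int n - 1 - 1) - cc p (U' - {j}) (int n - 1))
          \<le> p j * (1 - p j) * (c (int n - 1) * ((x - 1) / ((1 - p j) + p j * x)))"
        using pj by (intro mult_left_mono) auto
    qed
    also have "\<dots> = c (int n - 1) * F"
      unfolding F_def by (simp add: sum_distrib_left algebra_simps)
    finally show ?thesis using cn1 by (simp add: mult.commute)
  qed
  have dpos: "0 < d" using d1 by simp
  have main: "\<bar>1 - x\<bar> \<le> 6 / d"
  proof (cases "x < 1")
    case True
    have "F \<le> (\<Sum>j\<in>U'. p j * (1 - p j) * (x - 1))"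
      unfolding F_def
    proof (rule sum_mono)
      fix j assume j: "j \<in> U'"
      have pj: "0 < p j" "p j < 1" using pU j by auto
      have D0: "0 < (1 - p j) + p j * x" using pj x0 by (simp add: add_pos_nonneg)
      have D1: "(1 - p j) + p j * x \<le> 1" using pj True by (simp add: mult_left_le)
      have "(x - 1) \<le> (x - 1) * ((1 - p j) + p j * x)"
      proof -
        have "(x - 1) * (1 - ((1 - p j) + p j * x)) \<le> 0"
          using True D1 by (intro mult_nonpos_nonneg) auto
        thus ?thesis by (simp add: algebra_simps)
      qed
      hence "(x - 1) / ((1 - p j) + p j * x) \<le> x - 1" using D0 by (simp add: divide_le_eq)
      thus "p j * (1 - p j) * ((x - 1) / ((1 - p j) + p j * x)) \<le> p j * (1 - p j) * (x - 1)"
        using pj by (intro mult_left_mono) auto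
    qed
    also have "\<dots> = v * (x - 1)" unfolding v_def by (simp add: sum_distrib_right)
    finally have "- (1 - p i) \<le> v * (x - 1)" using low by linarith
    hence h1: "(1 - x) * v \<le> 1 - p i" by (simp add: algebra_simps)
    have h2: "(1 - x) * (p i * (1 - p i)) \<le> 1/4"
    proof -
      have "(1 - x) * (p i * (1 - p i)) \<le> 1 * (p i * (1 - p i))"
        using x0 piq0 by (intro mult_right_mono) auto
      thus ?thesis using piq by linarith
    qed
    have "(1 - x) * d = (1 - x) * v + (1 - x) * (p i * (1 - p i))" unfolding vd by (simp add: algebra_simps)
    hence "(1 - x) * d \<le> 6" using h1 h2 pi by linarith
    hence "1 - x \<le> 6 / d" using dpos by (simp add: le_divide_eq)
    thus ?thesis using True by simp
  next
    case False
    hence x1: "1 \<le> x" by simp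
    have "(x - 1) * d \<le> 6"
    proof (cases "6/5 \<le> d")
      case True
      have "(\<Sum>j\<in>U'. p j * (1 - p j) * ((x - 1) / x)) \<le> F"
        unfolding F_def
      proof (rule sum_mono)
        fix j assume j: "j \<in> U'"
        have pj: "0 < p j" "p j < 1" using pU j by auto
        have D0: "0 < (1 - p j) + p j * x" using pj x0 by (simp add: add_pos_nonneg)
        have D1: "(1 - p j) + p j * x \<le> x"
        proof -
          have "(1 - p j) * 1 \<le> (1 - p j) * x" using pj x1 by (intro mult_left_mono) auto
          thus ?thesis by (simp add: algebra_simps)
        qed
        have "(x - 1) / x \<le> (x - 1) / ((1 - p j) + p j * x)"
          by (rule divide_left_mono) (use x1 D0 D1 x0 in auto)
        thus "p j * (1 - p j) * ((x - 1) / x) \<le> p j * (1 - p j) * ((x - 1) / ((1 - p j) + p j * x))"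
          using pj by (intro mult_left_mono) auto
      qed
      also have "(\<Sum>j\<in>U'. p j * (1 - p j) * ((x - 1) / x)) = v * ((x - 1) / x)"
        unfolding v_def by (rule sum_distrib_right[symmetric])
      finally have "v * ((x - 1) / x) \<le> p i" using up by linarith
      hence "v * (x - 1) \<le> p i * x" using x0 by (simp add: divide_le_eq mult.commute)
      hence h1: "(x - 1) * (v - p i) \<le> p i" by (simp add: algebra_simps)
      have h2: "p i * d \<le> 6 * (v - p i)"
      proof -
        have "6 * (v - p i) - p i * d = 6 * (1 - p i)^2 - 6 + d * (6 - p i)"
          using vd by (simp add: algebra_simps power2_eq_square)
        moreover have "d * (6 - p i) \<ge> 6/5 * 5"
          using True pi by (intro mult_mono) auto
        moreover have "0 \<le> 6 * (1 - p i)^2" by simp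
        ultimately show ?thesis by linarith
      qed
      have "(x - 1) * (p i * d) \<le> (x - 1) * (6 * (v - p i))"
        using h2 x1 by (intro mult_left_mono) auto
      also have "\<dots> = 6 * ((x - 1) * (v - p i))" by (simp add: algebra_simps)
      also have "\<dots> \<le> 6 * p i" using h1 by simp
      finally have "p i * ((x - 1) * d) \<le> p i * 6" by (simp add: algebra_simps)
      thus ?thesis using pi by simp
    next
      case False
      have x6: "x < 6"
      proof (rule ccontr)
        assume "\<not> x < 6"
        hence "6 \<le> x" by simp
        hence big0: "6 * c (int n) \<le> c (int n - 1)" using cn unfolding x_def by (simp add: le_divide_eq)
        define m where "m = n - 1"
        define M where "M = N - 1"
        define cN where "cN k = c (int k)" for k :: nat
        have mom: "(\<Sum>k=0..M. cN k) = 1 \<and> (\<Sum>k=0..M. real k * cN k) = (\<Sum>j\<in>U'. p j) \<and>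
            (\<Sum>k=0..M. real k ^ 2 * cN k) = (\<Sum>j\<in>U'. p j) ^ 2 + v"
          using cc_moments[OF fU, of p] unfolding cN_def c_def M_def cardU v_def .
        have S0: "(\<Sum>k=0..M. cN k) = 1" using mom by simp
        have S1: "(\<Sum>k=0..M. real k * cN k) = real n - p i" using mom mu by simp
        have S2: "(\<Sum>k=0..M. real k ^ 2 * cN k) = (real n - p i) ^ 2 + v" using mom mu by simp
        have rm: "real m = real n - 1" unfolding m_def using n1 by (simp add: of_nat_diff)
        define T where "T = (\<Sum>k=0..M. (real k - real m) * (real k - real m - 1) * cN k)"
        have "T = (\<Sum>k=0..M. real k ^ 2 * cN k - (2 * real m + 1) * (real k * cN k) + real m * (real m + 1) * cN k)"
          unfolding T_def by (rule sum.cong) (simp_all add: algebra_simps power2_eq_square)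
        also have "\<dots> = (\<Sum>k=0..M. real k ^ 2 * cN k) - (2 * real m + 1) * (\<Sum>k=0..M. real k * cN k) + real m * (real m + 1) * (\<Sum>k=0..M. cN k)"
          by (simp only: sum.distrib sum_subtractf sum_distrib_left)
        finally have Tv: "T = (1 - p i)^2 - (1 - p i) + v"
          unfolding S0 S1 S2 rm by (simp add: algebra_simps power2_eq_square)
        have s1: "(\<Sum>k=0..M. (real k - real m) * cN k) = 1 - p i"
        proof -
          have "(\<Sum>k=0..M. (real k - real m) * cN k) = (\<Sum>k=0..M. real k * cN k) - real m * (\<Sum>k=0..M. cN k)"
            by (simp add: sum_subtractf sum_distrib_left left_diff_distrib)
          thus ?thesis unfolding S0 S1 rm by simp
        qed
        have "T + (1 - p i) - (1 - p i)^2 < 3/4"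
        proof (rule small_var[where c=cN and m=m and M=M])
          show "m < M" unfolding m_def M_def using nN n1 by simp
          show "\<And>k. 0 \<le> cN k" unfolding cN_def c_def by (rule cc_nonneg) (use pU in force)
          show "\<And>k. k \<le> M \<Longrightarrow> 0 < cN k" unfolding cN_def M_def using cpos by simp
          show "\<And>k. k + 2 \<le> M \<Longrightarrow> cN k * cN (k + 2) \<le> cN (Suc k) ^ 2"
          proof -
            fix k :: nat
            have "cc p U' ((int k + 1) - 1) * cc p U' ((int k + 1) + 1) \<le> cc p U' (int k + 1) ^ 2"
              by (rule cc_lc[OF fU pU])
            thus "cN k * cN (k + 2) \<le> cN (Suc k) ^ 2" unfolding cN_def c_def by (simp add: add.commute)
          qed
          show "(\<Sum>k=0..M. cN k) = 1" by (rule S0)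
          show "(\<Sum>k=0..M. (real k - real m) * cN k) = 1 - p i" by (rule s1)
          show "(\<Sum>k=0..M. (real k - real m) * (real k - real m - 1) * cN k) = T" unfolding T_def ..
          show "0 \<le> 1 - p i" using pi by simp
          show "6 * cN (Suc m) \<le> cN m" unfolding cN_def m_def using big0 n1 by (simp add: of_nat_diff)
        qed
        thus False using Tv v34 by (simp add: algebra_simps power2_eq_square)
      qed
      have "(x - 1) * d \<le> 5 * d" using x6 dpos by (intro mult_right_mono) auto
      thus ?thesis using False by linarith
    qed
    hence "x - 1 \<le> 6 / d" using dpos by (simp add: le_divide_eq)
    thus ?thesis using x1 by simp
  qed
  define a where "a = c (int n - 1)"
  define b where "b = c (int n)"
  have pe: "rej_incl N n p i = p i * a / (p i * a + (1 - p i) * b)"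
    unfolding a_def b_def c_def U'_def by (rule link[OF iN])
  have a0: "0 < a" and b0: "0 < b" using cn cn1 unfolding a_def b_def by auto
  have den: "0 < p i * a + (1 - p i) * b" using a0 b0 pi by (simp add: add_pos_pos)
  define K where "K = (1 - p i) * b / (p i * a)"
  have K0: "0 \<le> K" unfolding K_def using a0 b0 pi by simp
  have inv: "1 / rej_incl N n p i = (p i * a + (1 - p i) * b) / (p i * a)"
    unfolding pe by simp
  have pi0: "rej_incl N n p i \<noteq> 0" unfolding pe using a0 pi den by simp
  have e1: "(1 - rej_incl N n p i) / rej_incl N n p i = K"
  proof -
    have "(1 - rej_incl N n p i) / rej_incl N n p i = 1 / rej_incl N n p i - 1"
      using pi0 by (simp add: diff_divide_distrib)
    also have "\<dots> = K" unfolding inv K_def using a0 pi by (simp add: field_simps)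
    finally show ?thesis .
  qed
  have r1: "(p i * a + (1 - p i) * b) / (p i * a) - 1 / p i = (1 - p i) * (b - a) / (p i * a)"
    using a0 pi by (simp add: field_simps)
  have r2: "K * (1 - x) = (1 - p i) * (b - a) / (p i * a)"
    unfolding K_def x_def a_def[symmetric] b_def[symmetric] using a0 b0 pi by (simp add: field_simps)
  have e2: "1 / rej_incl N n p i - 1 / p i = K * (1 - x)"
    unfolding inv r1 r2 ..
  have "\<bar>1 / rej_incl N n p i - 1 / p i\<bar> = K * \<bar>1 - x\<bar>" unfolding e2 using K0 by (simp add: abs_mult)
  also have "\<dots> \<le> K * (6 / d)" by (rule mult_left_mono[OF main K0])
  finally show ?thesis unfolding e1 d_def by (simp add: mult.commute)
qed

end
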